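(* Let $d,n\ge1$ and $x_0,x_1,\dots,x_n\in\mathbb{R}^d$. Let $M^*$ be the solution (minimizer) of $$\min_M \tfrac12\|M\|^2 \quad\text{subject to}\quad (x_i-x_0)^T M (x_i-x_0)\ge 2\ \ \forall i\in\{1,\dots,n\},$$ where $M$ ranges over real $d\times d$ matrices. Then $M^*$ is also the solution of $$\min_M \tfrac12\|M\|^2 \quad\text{subject to}\quad (x_i-x_0)^T M (x_i-x_0)\ge 2\ \ \forall i\in\{1,\dots,n\},\quad M\succeq 0.$$
   Context: $\|M\|$ is the Frobenius norm, $\|M\|^2=\sum_{ij}M_{ij}^2$. $M\succeq 0$ means $M$ is a symmetric positive semidefinite matrix. *)

theory Defs
  imports "HOL-Analysis.Analysis"
begin

definition frob_norm :: "real^'n^'m \<Rightarrow> real" where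
  "frob_norm M = sqrt (\<Sum>i\<in>UNIV. \<Sum>j\<in>UNIV. (M $ i $ j)^2)"

definition psd :: "real^'n^'n \<Rightarrow> bool" where
  "psd M \<longleftrightarrow> transpose M = M \<and> (\<forall>v. 0 \<le> v \<bullet> (M *v v))"

definition feasible :: "nat \<Rightarrow> (nat \<Rightarrow> real^'n) \<Rightarrow> real^'n^'n \<Rightarrow> bool" where
  "feasible n x M \<longleftrightarrow> (\<forall>i\<in>{1..n}. 2 \<le> (x i - x 0) \<bullet> (M *v (x i - x 0)))"

end

theory Submission
  imports Defs
begin

definition FF :: "real^'n^'n \<Rightarrow> real" where
  "FF M = (\<Sum>i\<in>UNIV. \<Sum>j\<in>UNIV. (M $ i $ j)^2)"

lemma frob_sq: "(frob_norm M)^2 = FF M"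
  unfolding frob_norm_def FF_def by (simp add: sum_nonneg)

lemma quad_eq: fixes M :: "real^'n^'n" shows "w \<bullet> (M *v w) = (\<Sum>i\<in>UNIV. \<Sum>j\<in>UNIV. M$i$j * w$i * w$j)"
  by (simp add: inner_vec_def matrix_vector_mult_def sum_distrib_left algebra_simps)

lemma quad_trans: fixes M :: "real^'n^'n" shows "w \<bullet> (transpose M *v w) = w \<bullet> (M *v w)"
proof -
  have "w \<bullet> (transpose M *v w) = (\<Sum>i\<in>UNIV. \<Sum>j\<in>UNIV. M$j$i * w$i * w$j)"
    unfolding quad_eq by (simp add: transpose_def)
  also have "\<dots> = (\<Sum>j\<in>UNIV. \<Sum>i\<in>UNIV. M$j$i * w$i * w$j)" by (rule sum.swap)
  also have "\<dots> = w \<bullet> (M *v w)" unfolding quad_eq by (simp add: algebra_simps)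
  finally show ?thesis .
qed

lemma quad_sym: fixes M :: "real^'n^'n" shows "w \<bullet> (((1/2) *\<^sub>R (M + transpose M)) *v w) = w \<bullet> (M *v w)"
proof -
  have "w \<bullet> (((1/2) *\<^sub>R (M + transpose M)) *v w) = (1/2) * (w \<bullet> (M *v w) + w \<bullet> (transpose M *v w))"
    unfolding quad_eq by (simp add: sum.distrib sum_distrib_left algebra_simps)
  thus ?thesis by (subst (asm) quad_trans) simp
qed

lemma sym_min:
  fixes M :: "real^'n^'n"
  assumes "FF M \<le> FF ((1/2) *\<^sub>R (M + transpose M))"
  shows "transpose M = M"
proof -
  let ?S = "(1/2) *\<^sub>R (M + transpose M)"
  let ?D = "\<lambda>i j. ((M$i$j - M$j$i)/2)^2"
  have pt: "\<And>i j. (?S$i$j)^2 + ?D i j = ((M$i$j)^2 + (M$j$i)^2)/2"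
    by (simp add: transpose_def power2_eq_square field_simps)
  have sw: "(\<Sum>i\<in>UNIV. \<Sum>j\<in>UNIV. (M$j$i)^2) = FF M"
    unfolding FF_def by (rule sum.swap)
  have "FF ?S + (\<Sum>i\<in>UNIV. \<Sum>j\<in>UNIV. ?D i j) = (\<Sum>i\<in>UNIV. \<Sum>j\<in>UNIV. ((M$i$j)^2 + (M$j$i)^2)/2)"
    unfolding FF_def by (simp add: sum.distrib[symmetric] pt del: vector_scaleR_component)
  also have "\<dots> = FF M"
    using sw by (simp add: sum.distrib sum_divide_distrib[symmetric] FF_def)
  finally have "(\<Sum>i\<in>UNIV. \<Sum>j\<in>UNIV. ?D i j) \<le> 0" using assms by linarith
  moreover have "\<And>i. 0 \<le> (\<Sum>j\<in>UNIV. ?D i j)" by (simp add: sum_nonneg)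
  ultimately have "(\<Sum>i\<in>UNIV. \<Sum>j\<in>UNIV. ?D i j) = 0"
    by (meson antisym sum_nonneg)
  hence "\<And>i. (\<Sum>j\<in>UNIV. ?D i j) = 0"
    using sum_nonneg_eq_0_iff[of UNIV "\<lambda>i. \<Sum>j\<in>UNIV. ?D i j"] \<open>\<And>i. 0 \<le> (\<Sum>j\<in>UNIV. ?D i j)\<close> by simp
  hence "\<And>i j. ?D i j = 0"
    by (simp add: sum_nonneg_eq_0_iff)
  thus ?thesis by (simp add: vec_eq_iff transpose_def)
qed

lemma psd_min:
  fixes M :: "real^'n^'n"
  assumes "\<And>N. (\<And>w. w \<bullet> (M *v w) \<le> w \<bullet> (N *v w)) \<Longrightarrow> FF M \<le> FF N"
  shows "0 \<le> v \<bullet> (M *v v)"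
proof (rule ccontr)
  assume "\<not> ?thesis"
  hence q: "v \<bullet> (M *v v) < 0" by simp
  define q where "q = v \<bullet> (M *v v)"
  define s where "s = v \<bullet> v"
  have "v \<noteq> 0" using q by auto
  hence s0: "s > 0" unfolding s_def by simp
  define t where "t = - q / s^2"
  have "q / s^2 < 0" using q s0 unfolding q_def by (simp add: divide_neg_pos)
  hence t0: "t > 0" unfolding t_def by simp
  define N where "N = M + (\<chi> i j. t * v$i * v$j)"
  have "\<And>w. w \<bullet> (M *v w) \<le> w \<bullet> (N *v w)"
  proof -
    fix w :: "real^'n"
    have "w \<bullet> (N *v w) = w \<bullet> (M *v w) + t * (\<Sum>i\<in>UNIV. \<Sum>j\<in>UNIV. (v$i*w$i) * (v$j * w$j))"
      unfolding quad_eq N_def by (simp add: sum.distrib sum_distrib_left algebra_simps)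
    also have "(\<Sum>i\<in>UNIV. \<Sum>j\<in>UNIV. (v$i*w$i) * (v$j * w$j)) = (v \<bullet> w)^2"
      by (simp add: inner_vec_def power2_eq_square sum_product)
    finally show "w \<bullet> (M *v w) \<le> w \<bullet> (N *v w)" using t0 by simp
  qed
  hence le: "FF M \<le> FF N" by (rule assms)
  have "FF N = FF M + 2 * t * q + t^2 * s^2"
  proof -
    have "FF N = (\<Sum>i\<in>UNIV. \<Sum>j\<in>UNIV. (M$i$j)^2 + 2*t*(M$i$j * v$i * v$j) + t^2 * ((v$i)^2 * (v$j)^2))"
      unfolding FF_def N_def by (simp add: power2_eq_square algebra_simps)
    also have "\<dots> = FF M + 2*t*q + t^2 * s^2"
      unfolding FF_def q_def s_def quad_eq
      by (simp add: sum.distrib sum_distrib_left inner_vec_def power2_eq_square sum_product algebra_simps)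
    finally show ?thesis .
  qed
  also have "\<dots> = FF M - q^2 / s^2"
    unfolding t_def using s0 by (simp add: field_simps power2_eq_square)
  finally have "FF N < FF M" using q s0 unfolding q_def by simp
  with le show False by simp
qed

theorem theorem2:
  fixes x :: "nat \<Rightarrow> real^'d" and n :: nat and Mstar :: "real^'d^'d"
  assumes "n \<ge> 1"
    and "feasible n x Mstar"
    and "\<forall>M. feasible n x M \<longrightarrow> (1/2) * (frob_norm Mstar)^2 \<le> (1/2) * (frob_norm M)^2"
  shows "feasible n x Mstar \<and> psd Mstar \<and>
         (\<forall>M. feasible n x M \<and> psd M \<longrightarrow> (1/2) * (frob_norm Mstar)^2 \<le> (1/2) * (frob_norm M)^2)"
proof -
  have mn: "\<And>M. feasible n x M \<Longrightarrow> FF Mstar \<le> FF M" using assms(3) by (simp add: frob_sq)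
  have "feasible n x ((1/2) *\<^sub>R (Mstar + transpose Mstar))"
    using assms(2) unfolding feasible_def
    by (simp add: quad_sym)
  hence sym: "transpose Mstar = Mstar" by (rule sym_min[OF mn])
  have "\<And>v. 0 \<le> v \<bullet> (Mstar *v v)"
  proof (rule psd_min)
    fix N :: "real^'d^'d"
    assume "\<And>w. w \<bullet> (Mstar *v w) \<le> w \<bullet> (N *v w)"
    hence "feasible n x N" using assms(2) unfolding feasible_def by (meson order.trans)
    thus "FF Mstar \<le> FF N" by (rule mn)
  qed
  thus ?thesis using assms(2,3) sym unfolding psd_def by blast
qed

end
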